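(* Let $\Gamma$ be a graph. An element $a\in H_1(\Gamma;\mathbb{Z}/2\mathbb{Z})$ is a tile of the homological additive poset of $\Gamma$ if and only if its support $\Gamma_a$ is a geometric tile.
   Context: A graph is a 1-dimensional CW-complex (vertices and edges). Each element $a$ of $H=H_1(\Gamma;\mathbb{Z}/2\mathbb{Z})$ is represented by a unique 1-cycle (finite set of edges with every vertex incident to an even number of them, with multiplicity); ordering by inclusion of 1-cycles gives the homological additive poset of $\Gamma$. The support $\Gamma_a$ is the subgraph formed by the edges of this 1-cycle and their endpoints. Elements $x,y$ are independent if $x\le x+y$; an atom is a nonzero $x$ whose only predecessors are $0,x$; a tile is a nonzero $x$ such that any two distinct atoms $\le x$ are independent. Geometric tiles are defined recursively: a geometric tile of weight 1 is a graph homeomorphic to a circle; a geometric tile of weight $n+1$ ($n\ge1$) is either a wedge (identification of one vertex of one graph with one vertex of the other) of a geometric tile of weight $n$ and a geometric tile of weight 1, or a disjoint union of two geometric tiles whose weights sum to $n+1$. A geometric tile is a graph that is a geometric tile of some weight. *)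

theory Defs
  imports Main
begin

text \<open>A graph (1-dimensional CW complex) is given by a vertex set V, an edge set E,
  and an endpoint map endp assigning to each edge its (unordered) pair of endpoints,
  recorded as an ordered pair; a loop has both endpoints equal.  Subgraphs share the
  ambient endpoint map, so a (sub)graph is described by a pair of sets (V, E).\<close>

definition graph_wf :: "('e \<Rightarrow> 'v \<times> 'v) \<Rightarrow> 'v set \<Rightarrow> 'e set \<Rightarrow> bool" where
  "graph_wf endp V E \<longleftrightarrow> (\<forall>e\<in>E. fst (endp e) \<in> V \<and> snd (endp e) \<in> V)"

text \<open>Number of edge-ends of edges of C at v (a loop counts twice).\<close>
definition deg :: "('e \<Rightarrow> 'v \<times> 'v) \<Rightarrow> 'e set \<Rightarrow> 'v \<Rightarrow> nat" where
  "deg endp C v = card {e\<in>C. fst (endp e) = v} + card {e\<in>C. snd (endp e) = v}"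

text \<open>H_1(Gamma; Z/2): the 1-cycles, i.e. finite edge sets with every vertex of even degree.\<close>
definition H1 :: "('e \<Rightarrow> 'v \<times> 'v) \<Rightarrow> 'e set \<Rightarrow> 'e set set" where
  "H1 endp E = {C. finite C \<and> C \<subseteq> E \<and> (\<forall>v. even (deg endp C v))}"

text \<open>Addition in H_1 is symmetric difference of 1-cycles; the order is inclusion.\<close>
definition hadd :: "'e set \<Rightarrow> 'e set \<Rightarrow> 'e set" where
  "hadd x y = (x - y) \<union> (y - x)"

definition independent :: "'e set \<Rightarrow> 'e set \<Rightarrow> bool" where
  "independent x y \<longleftrightarrow> x \<subseteq> hadd x y"

definition is_atom :: "('e \<Rightarrow> 'v \<times> 'v) \<Rightarrow> 'e set \<Rightarrow> 'e set \<Rightarrow> bool" where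
  "is_atom endp E x \<longleftrightarrow> x \<in> H1 endp E \<and> x \<noteq> {} \<and>
     (\<forall>y\<in>H1 endp E. y \<subseteq> x \<longrightarrow> y = {} \<or> y = x)"

definition is_tile :: "('e \<Rightarrow> 'v \<times> 'v) \<Rightarrow> 'e set \<Rightarrow> 'e set \<Rightarrow> bool" where
  "is_tile endp E x \<longleftrightarrow> x \<in> H1 endp E \<and> x \<noteq> {} \<and>
     (\<forall>a b. is_atom endp E a \<longrightarrow> is_atom endp E b \<longrightarrow> a \<subseteq> x \<longrightarrow> b \<subseteq> x \<longrightarrow> a \<noteq> b
        \<longrightarrow> independent a b)"

definition support_verts :: "('e \<Rightarrow> 'v \<times> 'v) \<Rightarrow> 'e set \<Rightarrow> 'v set" where
  "support_verts endp a = {v. \<exists>e\<in>a. v = fst (endp e) \<or> v = snd (endp e)}"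

definition adj :: "('e \<Rightarrow> 'v \<times> 'v) \<Rightarrow> 'e set \<Rightarrow> ('v \<times> 'v) set" where
  "adj endp E = {(u, w). \<exists>e\<in>E. endp e = (u, w) \<or> endp e = (w, u)}"

definition connected_graph :: "('e \<Rightarrow> 'v \<times> 'v) \<Rightarrow> 'v set \<Rightarrow> 'e set \<Rightarrow> bool" where
  "connected_graph endp V E \<longleftrightarrow> V \<noteq> {} \<and> (\<forall>u\<in>V. \<forall>w\<in>V. (u, w) \<in> (adj endp E)\<^sup>*)"

text \<open>Graphs homeomorphic to a circle: finite connected graphs, with at least one edge,
  in which every vertex has degree 2 (cycle graphs, allowing loops and multi-edges).\<close>
definition circle_graph :: "('e \<Rightarrow> 'v \<times> 'v) \<Rightarrow> 'v set \<Rightarrow> 'e set \<Rightarrow> bool" where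
  "circle_graph endp V E \<longleftrightarrow> graph_wf endp V E \<and> finite V \<and> finite E \<and> E \<noteq> {} \<and>
     connected_graph endp V E \<and> (\<forall>v\<in>V. deg endp E v = 2)"

text \<open>A wedge of two
  graphs is realised as a union of two subgraphs with disjoint edge sets and exactly
  one common vertex; a disjoint union as a union of two vertex-disjoint subgraphs.\<close>
inductive geo_tile :: "('e \<Rightarrow> 'v \<times> 'v) \<Rightarrow> 'v set \<Rightarrow> 'e set \<Rightarrow> nat \<Rightarrow> bool"
  for endp :: "'e \<Rightarrow> 'v \<times> 'v" where
  circle: "circle_graph endp V E \<Longrightarrow> geo_tile endp V E 1"
| wedge: "\<lbrakk> n \<ge> 1; geo_tile endp V1 E1 n; geo_tile endp V2 E2 1;
            E1 \<inter> E2 = {}; \<exists>x. V1 \<inter> V2 = {x} \<rbrakk>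
          \<Longrightarrow> geo_tile endp (V1 \<union> V2) (E1 \<union> E2) (Suc n)"
| disj: "\<lbrakk> geo_tile endp V1 E1 n1; geo_tile endp V2 E2 n2; V1 \<inter> V2 = {}; E1 \<inter> E2 = {} \<rbrakk>
          \<Longrightarrow> geo_tile endp (V1 \<union> V2) (E1 \<union> E2) (n1 + n2)"

definition is_geo_tile :: "('e \<Rightarrow> 'v \<times> 'v) \<Rightarrow> 'v set \<Rightarrow> 'e set \<Rightarrow> bool" where
  "is_geo_tile endp V E \<longleftrightarrow> (\<exists>n. geo_tile endp V E n)"

end

theory Submission
  imports Defs
begin


definition ev :: "('e \<Rightarrow> 'v \<times> 'v) \<Rightarrow> 'e set \<Rightarrow> bool" where
  "ev endp S \<longleftrightarrow> (\<forall>v. even (deg endp S v))"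
definition atm :: "('e \<Rightarrow> 'v \<times> 'v) \<Rightarrow> 'e set \<Rightarrow> bool" where
  "atm endp S \<longleftrightarrow> finite S \<and> S \<noteq> {} \<and> ev endp S \<and> (\<forall>T\<subseteq>S. ev endp T \<longrightarrow> T = {} \<or> T = S)"
definition tilep :: "('e \<Rightarrow> 'v \<times> 'v) \<Rightarrow> 'e set \<Rightarrow> bool" where
  "tilep endp a \<longleftrightarrow> finite a \<and> a \<noteq> {} \<and> ev endp a \<and>
    (\<forall>c d. atm endp c \<longrightarrow> atm endp d \<longrightarrow> c \<subseteq> a \<longrightarrow> d \<subseteq> a \<longrightarrow> c \<noteq> d \<longrightarrow> c \<inter> d = {})"
definition ends :: "('e \<Rightarrow> 'v \<times> 'v) \<Rightarrow> 'e \<Rightarrow> 'v \<Rightarrow> nat" where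
  "ends endp e w = (if fst (endp e) = w then 1 else 0) + (if snd (endp e) = w then 1 else 0)"

lemma deg_empty[simp]: "deg endp {} v = 0"
  by (simp add: deg_def)

lemma deg_insert: "finite A \<Longrightarrow> e \<notin> A \<Longrightarrow> deg endp (insert e A) w = deg endp A w + ends endp e w"
proof -
  assume f: "finite A" and n: "e \<notin> A"
  have 1: "{x\<in>insert e A. fst (endp x) = w} = (if fst (endp e) = w then insert e {x\<in>A. fst (endp x) = w} else {x\<in>A. fst (endp x) = w})" by auto
  have 2: "{x\<in>insert e A. snd (endp x) = w} = (if snd (endp e) = w then insert e {x\<in>A. snd (endp x) = w} else {x\<in>A. snd (endp x) = w})" by auto
  show ?thesis unfolding deg_def ends_def 1 2 using f n by auto
qed

lemma deg_Un: "finite A \<Longrightarrow> finite B \<Longrightarrow> A \<inter> B = {} \<Longrightarrow> deg endp (A \<union> B) w = deg endp A w + deg endp B w"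
proof -
  assume f: "finite A" "finite B" "A \<inter> B = {}"
  have 1: "{x\<in>A \<union> B. fst (endp x) = w} = {x\<in>A. fst (endp x) = w} \<union> {x\<in>B. fst (endp x) = w}" by auto
  have 2: "{x\<in>A \<union> B. snd (endp x) = w} = {x\<in>A. snd (endp x) = w} \<union> {x\<in>B. snd (endp x) = w}" by auto
  show ?thesis unfolding deg_def 1 2 using f by (simp add: card_Un_disjoint disjoint_iff)
qed

lemma deg_mono: "finite B \<Longrightarrow> A \<subseteq> B \<Longrightarrow> deg endp A w \<le> deg endp B w"
  unfolding deg_def by (intro add_mono card_mono) auto

lemma deg_zero: "(\<forall>e\<in>A. fst (endp e) \<noteq> w \<and> snd (endp e) \<noteq> w) \<Longrightarrow> deg endp A w = 0"
  unfolding deg_def by (simp add: card_eq_0_iff)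

lemma ev_diff: "finite A \<Longrightarrow> B \<subseteq> A \<Longrightarrow> ev endp A \<Longrightarrow> ev endp B \<Longrightarrow> ev endp (A - B)"
proof -
  assume a: "finite A" "B \<subseteq> A" "ev endp A" "ev endp B"
  have "A = B \<union> (A - B)" using a by auto
  have fB: "finite B" using a finite_subset by blast
  have "deg endp A w = deg endp B w + deg endp (A - B) w" for w
    using deg_Un[of B "A - B" endp w] fB a(1) \<open>A = B \<union> (A - B)\<close> by simp
  thus ?thesis using a unfolding ev_def by simp
qed

lemma ev_Un: "finite A \<Longrightarrow> finite B \<Longrightarrow> A \<inter> B = {} \<Longrightarrow> ev endp A \<Longrightarrow> ev endp B \<Longrightarrow> ev endp (A \<union> B)"
  unfolding ev_def by (simp add: deg_Un)

lemma support_eq: "support_verts endp A = (\<lambda>e. fst (endp e)) ` A \<union> (\<lambda>e. snd (endp e)) ` A"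
  unfolding support_verts_def by auto

lemma finite_support: "finite A \<Longrightarrow> finite (support_verts endp A)"
  unfolding support_eq by auto

lemma handshake: "finite A \<Longrightarrow> finite X \<Longrightarrow> (\<forall>e\<in>A. fst (endp e) \<in> X \<and> snd (endp e) \<in> X)
  \<Longrightarrow> (\<Sum>w\<in>X. deg endp A w) = 2 * card A"
proof (induction A rule: finite_induct)
  case empty then show ?case by simp
next
  case (insert e A)
  have "(\<Sum>w\<in>X. deg endp (insert e A) w) = (\<Sum>w\<in>X. deg endp A w) + (\<Sum>w\<in>X. ends endp e w)"
    using insert by (simp add: deg_insert sum.distrib)
  also have "(\<Sum>w\<in>X. ends endp e w) = 2"
  proof -
    have 1: "(\<Sum>w\<in>X. (if fst (endp e) = w then 1 else 0)) = (1::nat)"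
      using insert by (subst sum.delta') auto
    have 2: "(\<Sum>w\<in>X. (if snd (endp e) = w then 1 else 0)) = (1::nat)"
      using insert by (subst sum.delta') auto
    show ?thesis unfolding ends_def sum.distrib 1 2 by simp
  qed
  finally show ?case using insert by simp
qed

lemma handshake_parity: "finite A \<Longrightarrow> (\<And>w. w \<noteq> v \<Longrightarrow> even (deg endp A w)) \<Longrightarrow> even (deg endp A v)"
proof -
  assume f: "finite A" and h: "\<And>w. w \<noteq> v \<Longrightarrow> even (deg endp A w)"
  define X where "X = insert v (support_verts endp A)"
  have fX: "finite X" using f finite_support X_def by auto
  have "(\<Sum>w\<in>X. deg endp A w) = 2 * card A"
    by (rule handshake[OF f fX]) (auto simp: X_def support_verts_def)
  moreover have "(\<Sum>w\<in>X. deg endp A w) = deg endp A v + (\<Sum>w\<in>X - {v}. deg endp A w)"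
    using fX unfolding X_def by (rule sum.remove) simp
  moreover have "even (\<Sum>w\<in>X - {v}. deg endp A w)" using h by (intro dvd_sum) auto
  ultimately have "even (deg endp A v + (\<Sum>w\<in>X - {v}. deg endp A w))" by simp
  thus ?thesis using \<open>even (\<Sum>w\<in>X - {v}. deg endp A w)\<close> by simp
qed




lemma even_le2: "even (n::nat) \<Longrightarrow> n \<noteq> 0 \<Longrightarrow> n \<le> 2 \<Longrightarrow> n = 2"
proof -
  assume "even n" "n \<noteq> 0" "n \<le> 2"
  moreover hence "n = 1 \<or> n = 2" by arith
  ultimately show "n = 2" by auto
qed

lemma geo_basic: "geo_tile endp V E n \<Longrightarrow> graph_wf endp V E \<and> finite E \<and> E \<noteq> {} \<and> n \<ge> 1"
  by (induction rule: geo_tile.induct) (auto simp: circle_graph_def graph_wf_def)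

lemma circle_full:
  assumes c: "circle_graph endp V E" and S: "S \<subseteq> E" "ev endp S" "S \<noteq> {}"
  shows "S = E"
proof -
  have wf: "graph_wf endp V E" and fE: "finite E" and con: "connected_graph endp V E"
    and d2: "\<And>v. v \<in> V \<Longrightarrow> deg endp E v = 2" using c unfolding circle_graph_def by auto
  have fS: "finite S" using S fE finite_subset by blast
  define T where "T = {v. \<exists>e\<in>S. fst (endp e) = v \<or> snd (endp e) = v}"
  have claim1: "e \<in> S" if vT: "v \<in> V" "v \<in> T" "e \<in> E" "fst (endp e) = v \<or> snd (endp e) = v" for v e
  proof -
    obtain e0 where e0: "e0 \<in> S" "fst (endp e0) = v \<or> snd (endp e0) = v" using vT(2) T_def by auto
    have s1: "{x\<in>S. fst (endp x) = v} \<subseteq> {x\<in>E. fst (endp x) = v}" using S by auto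
    have s2: "{x\<in>S. snd (endp x) = v} \<subseteq> {x\<in>E. snd (endp x) = v}" using S by auto
    have c1: "card {x\<in>S. fst (endp x) = v} \<le> card {x\<in>E. fst (endp x) = v}" using s1 fE by (intro card_mono) auto
    have c2: "card {x\<in>S. snd (endp x) = v} \<le> card {x\<in>E. snd (endp x) = v}" using s2 fE by (intro card_mono) auto
    have pos: "deg endp S v \<noteq> 0" unfolding deg_def using e0 fS by auto
    have "even (deg endp S v)" using S unfolding ev_def by auto
    moreover have "deg endp S v \<le> 2" using d2[OF that(1)] c1 c2 unfolding deg_def by simp
    ultimately have "deg endp S v = 2" using pos even_le2 by blast
    hence q1: "card {x\<in>S. fst (endp x) = v} = card {x\<in>E. fst (endp x) = v}"
      and q2: "card {x\<in>S. snd (endp x) = v} = card {x\<in>E. snd (endp x) = v}"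
      using d2[OF that(1)] c1 c2 unfolding deg_def by linarith+
    have "{x\<in>S. fst (endp x) = v} = {x\<in>E. fst (endp x) = v}" 
      by (rule card_subset_eq[OF _ s1 q1]) (use fE in auto)
    moreover have "{x\<in>S. snd (endp x) = v} = {x\<in>E. snd (endp x) = v}"
      by (rule card_subset_eq[OF _ s2 q2]) (use fE in auto)
    ultimately show ?thesis using vT by blast
  qed
  have claim2: "w \<in> V \<and> w \<in> T" if "(u, w) \<in> (adj endp E)\<^sup>*" "u \<in> V" "u \<in> T" for u w
    using that
  proof (induction rule: rtrancl_induct)
    case base then show ?case by simp
  next
    case (step y z)
    then obtain g where g: "g \<in> E" "endp g = (y, z) \<or> endp g = (z, y)" unfolding adj_def by auto
    have "g \<in> S" using claim1[of y g] step g by auto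
    moreover have "z \<in> V" using wf g unfolding graph_wf_def by force
    ultimately show ?case using g unfolding T_def by force
  qed
  obtain e0 where e0: "e0 \<in> S" using S by auto
  define u where "u = fst (endp e0)"
  have uV: "u \<in> V" using e0 S wf u_def unfolding graph_wf_def by auto
  have uT: "u \<in> T" using e0 u_def T_def by auto
  have allT: "w \<in> T" if "w \<in> V" for w using con uV that claim2[of u w] uT unfolding connected_graph_def by auto
  show ?thesis
  proof
    show "E \<subseteq> S"
    proof
      fix e assume "e \<in> E"
      moreover hence "fst (endp e) \<in> V" using wf unfolding graph_wf_def by auto
      ultimately show "e \<in> S" using claim1 allT by blast
    qed
  qed (rule S(1))
qed

lemma split_atom:
  assumes wf1: "graph_wf endp V1 E1" and wf2: "graph_wf endp V2 E2"
    and dj: "E1 \<inter> E2 = {}" and vi: "V1 \<inter> V2 \<subseteq> {x}"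
    and c: "atm endp c" "c \<subseteq> E1 \<union> E2"
  shows "c \<subseteq> E1 \<or> c \<subseteq> E2"
proof -
  have fc: "finite c" and evc: "ev endp c" and mn: "\<And>T. T \<subseteq> c \<Longrightarrow> ev endp T \<Longrightarrow> T = {} \<or> T = c"
    using c unfolding atm_def by auto
  define c1 where "c1 = c \<inter> E1"
  have fc1: "finite c1" using fc c1_def by auto
  have "even (deg endp c1 w)" if "w \<noteq> x" for w
  proof (cases "w \<in> V1")
    case True
    have "w \<notin> V2" using True vi that by auto
    hence "{e\<in>c1. fst (endp e) = w} = {e\<in>c. fst (endp e) = w}" "{e\<in>c1. snd (endp e) = w} = {e\<in>c. snd (endp e) = w}"
      using c wf2 unfolding c1_def graph_wf_def by auto
    hence "deg endp c1 w = deg endp c w" unfolding deg_def by simp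
    then show ?thesis using evc unfolding ev_def by simp
  next
    case False
    hence "deg endp c1 w = 0" using wf1 unfolding c1_def graph_wf_def by (intro deg_zero) auto
    then show ?thesis by simp
  qed
  hence "ev endp c1" using handshake_parity[OF fc1] unfolding ev_def by metis
  hence "c1 = {} \<or> c1 = c" using mn c1_def by auto
  thus ?thesis using c1_def c by auto
qed

definition QQ :: "('e \<Rightarrow> 'v \<times> 'v) \<Rightarrow> 'e set \<Rightarrow> bool" where
  "QQ endp E \<longleftrightarrow> (\<forall>c d. atm endp c \<longrightarrow> atm endp d \<longrightarrow> c \<subseteq> E \<longrightarrow> d \<subseteq> E \<longrightarrow> c \<noteq> d \<longrightarrow> c \<inter> d = {})"

lemma QQ_combine:
  assumes "graph_wf endp V1 E1" "graph_wf endp V2 E2" "E1 \<inter> E2 = {}" "V1 \<inter> V2 \<subseteq> {x}"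
    "QQ endp E1" "QQ endp E2"
  shows "QQ endp (E1 \<union> E2)"
  unfolding QQ_def
proof (intro allI impI)
  fix c d assume h: "atm endp c" "atm endp d" "c \<subseteq> E1 \<union> E2" "d \<subseteq> E1 \<union> E2" "c \<noteq> d"
  have "c \<subseteq> E1 \<or> c \<subseteq> E2" using split_atom[OF assms(1-4) h(1) h(3)] .
  moreover have "d \<subseteq> E1 \<or> d \<subseteq> E2" using split_atom[OF assms(1-4) h(2) h(4)] .
  ultimately
  show "c \<inter> d = {}" using assms(3,5,6) h unfolding QQ_def by blast
qed

lemma geo_QQ: "geo_tile endp V E n \<Longrightarrow> QQ endp E"
proof (induction rule: geo_tile.induct)
  case (circle V E)
  show ?case unfolding QQ_def
  proof (intro allI impI)
    fix c d assume h: "atm endp c" "atm endp d" "c \<subseteq> E" "d \<subseteq> E" "c \<noteq> d"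
    have "c = E" using circle_full[OF circle(1) h(3)] h(1) unfolding atm_def by auto
    moreover have "d = E" using circle_full[OF circle(1) h(4)] h(2) unfolding atm_def by auto
    ultimately show "c \<inter> d = {}" using h by simp
  qed
next
  case (wedge n V1 E1 V2 E2)
  then obtain x where "V1 \<inter> V2 = {x}" by auto
  then show ?case using QQ_combine[of endp V1 E1 V2 E2 x] wedge geo_basic by blast
next
  case (disj V1 E1 n1 V2 E2 n2)
  then show ?case using QQ_combine[of endp V1 E1 V2 E2 undefined] geo_basic by blast
qed




lemma geo_wedge_gen:
  "geo_tile endp V2 E2 n2 \<Longrightarrow> geo_tile endp V1 E1 n1 \<Longrightarrow> E1 \<inter> E2 = {} \<Longrightarrow> V1 \<inter> V2 \<subseteq> {x}
   \<Longrightarrow> \<exists>n. geo_tile endp (V1 \<union> V2) (E1 \<union> E2) n"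
proof (induction arbitrary: V1 E1 n1 x rule: geo_tile.induct)
  case (circle V E)
  have g2: "geo_tile endp V E 1" using circle(1) by (rule geo_tile.circle)
  show ?case
  proof (cases "V1 \<inter> V = {}")
    case True
    then show ?thesis using geo_tile.disj[OF circle(2) g2 True circle(3)] by blast
  next
    case False
    hence "V1 \<inter> V = {x}" using circle(4) by blast
    moreover have "n1 \<ge> 1" using geo_basic[OF circle(2)] by simp
    ultimately show ?thesis using geo_tile.wedge[OF _ circle(2) g2 circle(3)] by blast
  qed
next
  case (wedge n W1 F1 C D)
  obtain y where y: "W1 \<inter> C = {y}" using wedge.hyps(5) by blast
  show ?case
  proof (cases "x \<in> C \<and> x \<noteq> y")
    case True
    hence xW: "x \<notin> W1" using y by blast
    obtain m where m: "geo_tile endp (V1 \<union> C) (E1 \<union> D) m"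
      using wedge.IH(2)[of V1 E1 n1 x] wedge.prems by blast
    have "(V1 \<union> C) \<inter> W1 \<subseteq> {y}" using wedge.prems(3) xW y by blast
    moreover have "(E1 \<union> D) \<inter> F1 = {}" using wedge.prems(2) wedge.hyps(4) by blast
    ultimately obtain k where "geo_tile endp ((V1 \<union> C) \<union> W1) ((E1 \<union> D) \<union> F1) k"
      using wedge.IH(1)[OF m] by blast
    moreover have "(V1 \<union> C) \<union> W1 = V1 \<union> (W1 \<union> C)" "(E1 \<union> D) \<union> F1 = E1 \<union> (F1 \<union> D)" by blast+
    ultimately show ?thesis by auto
  next
    case False
    obtain m where m: "geo_tile endp (V1 \<union> W1) (E1 \<union> F1) m"
      using wedge.IH(1)[of V1 E1 n1 x] wedge.prems by blast
    have "(V1 \<union> W1) \<inter> C \<subseteq> {y}" using wedge.prems(3) False y by blast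
    moreover have "(E1 \<union> F1) \<inter> D = {}" using wedge.prems(2) wedge.hyps(4) by blast
    ultimately obtain k where "geo_tile endp ((V1 \<union> W1) \<union> C) ((E1 \<union> F1) \<union> D) k"
      using wedge.IH(2)[OF m] by blast
    moreover have "(V1 \<union> W1) \<union> C = V1 \<union> (W1 \<union> C)" "(E1 \<union> F1) \<union> D = E1 \<union> (F1 \<union> D)" by blast+
    ultimately show ?thesis by auto
  qed
next
  case (disj W1 F1 m1 W2 F2 m2)
  obtain m where m: "geo_tile endp (V1 \<union> W1) (E1 \<union> F1) m"
    using disj.IH(1)[of V1 E1 n1 x] disj.prems by blast
  have "(V1 \<union> W1) \<inter> W2 \<subseteq> {x}" using disj.prems(3) disj.hyps(3) by blast
  moreover have "(E1 \<union> F1) \<inter> F2 = {}" using disj.prems(2) disj.hyps(4) by blast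
  ultimately obtain k where "geo_tile endp ((V1 \<union> W1) \<union> W2) ((E1 \<union> F1) \<union> F2) k"
    using disj.IH(2)[OF m] by blast
  moreover have "(V1 \<union> W1) \<union> W2 = V1 \<union> (W1 \<union> W2)" "(E1 \<union> F1) \<union> F2 = E1 \<union> (F1 \<union> F2)" by blast+
  ultimately show ?case by auto
qed

lemma atom_exists: "finite D \<Longrightarrow> ev endp D \<Longrightarrow> D \<noteq> {} \<Longrightarrow> \<exists>m\<subseteq>D. atm endp m"
proof (induction D rule: finite_psubset_induct)
  case (psubset D)
  show ?case
  proof (cases "atm endp D")
    case True then show ?thesis by blast
  next
    case False
    then obtain T where T: "T \<subseteq> D" "ev endp T" "T \<noteq> {}" "T \<noteq> D"
      using psubset.prems psubset.hyps unfolding atm_def by blast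
    then obtain m where "m \<subseteq> T" "atm endp m"
      using psubset.IH[of T] psubset.hyps finite_subset by blast
    then show ?thesis using T by blast
  qed
qed

lemma atom_dec: "finite D \<Longrightarrow> ev endp D \<Longrightarrow> e \<in> D \<Longrightarrow> \<exists>d\<subseteq>D. atm endp d \<and> e \<in> d"
proof (induction D rule: finite_psubset_induct)
  case (psubset D)
  obtain m where m: "m \<subseteq> D" "atm endp m" using atom_exists[OF psubset.hyps psubset.prems(1)] psubset.prems(2) by blast
  show ?case
  proof (cases "e \<in> m")
    case True then show ?thesis using m by blast
  next
    case False
    have "m \<noteq> {}" "ev endp m" using m unfolding atm_def by auto
    hence "D - m \<subset> D" "ev endp (D - m)" using m ev_diff[OF psubset.hyps m(1) psubset.prems(1)] by auto
    then obtain d where "d \<subseteq> D - m" "atm endp d" "e \<in> d"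
      using psubset.IH[of "D - m"] psubset.prems False by blast
    then show ?thesis by blast
  qed
qed




lemma ends_edge: "endp g = (z, y) \<or> endp g = (y, z) \<Longrightarrow>
   ends endp g w = (if w = z then 1 else 0) + (if w = y then 1 else 0)"
  by (elim disjE) (auto simp: ends_def)

lemma toggle: "finite J \<Longrightarrow> \<exists>J'. finite J' \<and> J' \<subseteq> insert g J \<and>
   (\<forall>w. even (deg endp J' w) \<longleftrightarrow> even (deg endp J w + ends endp g w))"
proof -
  assume f: "finite J"
  show ?thesis
  proof (cases "g \<in> J")
    case True
    have h: "insert g (J - {g}) = J" using True by blast
    have "deg endp J w = deg endp (J - {g}) w + ends endp g w" for w
      using deg_insert[of "J - {g}" g endp w, unfolded h] f by simp
    hence "deg endp J w + ends endp g w = deg endp (J - {g}) w + 2 * ends endp g w" for w by simp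
    hence p: "even (deg endp (J - {g}) w) \<longleftrightarrow> even (deg endp J w + ends endp g w)" for w by auto
    show ?thesis
    proof (intro exI[of _ "J - {g}"] conjI allI)
      show "finite (J - {g})" using f by simp
      show "J - {g} \<subseteq> insert g J" by blast
    qed (rule p)
  next
    case False
    have "deg endp (insert g J) w = deg endp J w + ends endp g w" for w by (rule deg_insert[OF f False])
    hence p: "even (deg endp (insert g J) w) \<longleftrightarrow> even (deg endp J w + ends endp g w)" for w by simp
    show ?thesis
    proof (intro exI[of _ "insert g J"] conjI allI)
      show "finite (insert g J)" using f by simp
      show "insert g J \<subseteq> insert g J" by blast
    qed (rule p)
  qed
qed

lemma join: "(x, y) \<in> (adj endp A)\<^sup>* \<Longrightarrow>
   \<exists>J. finite J \<and> J \<subseteq> A \<and> (\<forall>w. odd (deg endp J w) \<longleftrightarrow> ((w = x) \<noteq> (w = y)))"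
proof (induction rule: rtrancl_induct)
  case base
  show ?case by (intro exI[of _ "{}"]) simp
next
  case (step z y)
  obtain J where J: "finite J" "J \<subseteq> A" "\<forall>w. odd (deg endp J w) \<longleftrightarrow> ((w = x) \<noteq> (w = z))"
    using step.IH by metis
  obtain g where g: "g \<in> A" "endp g = (z, y) \<or> endp g = (y, z)" using step.hyps(2) unfolding adj_def by auto
  obtain J' where J': "finite J'" "J' \<subseteq> insert g J" "\<forall>w. even (deg endp J' w) \<longleftrightarrow> even (deg endp J w + ends endp g w)"
    using toggle[OF J(1)] by metis
  have "odd (deg endp J' w) \<longleftrightarrow> ((w = x) \<noteq> (w = y))" for w
  proof -
    have e: "ends endp g w = (if w = z then 1 else 0) + (if w = y then 1 else 0)" by (rule ends_edge[of endp g z y, OF g(2)])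
    have j3: "odd (deg endp J w) \<longleftrightarrow> ((w = x) \<noteq> (w = z))" using J(3) by simp
    have j4: "even (deg endp J' w) \<longleftrightarrow> even (deg endp J w + ends endp g w)" using J'(3) by simp
    show ?thesis unfolding e using j3 j4 e by (cases "w = z"; cases "w = y"; cases "w = x") auto
  qed
  moreover have "J' \<subseteq> A" using J'(2) J(2) g(1) by blast
  ultimately show ?case using J'(1) by blast
qed

locale splitK =
  fixes endp :: "'e \<Rightarrow> 'v \<times> 'v" and a :: "'e set" and W :: "'v set" and x1 :: 'v
begin

definition A0 where "A0 = {e\<in>a. fst (endp e) \<notin> W \<and> snd (endp e) \<notin> W}"
definition R where "R = (adj endp A0)\<^sup>*"
definition K where "K = {e\<in>a. (fst (endp e) \<notin> W \<and> (x1, fst (endp e)) \<in> R) \<or> (snd (endp e) \<notin> W \<and> (x1, snd (endp e)) \<in> R)}"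

lemma K1: "y \<notin> W \<Longrightarrow> e \<in> a \<Longrightarrow> fst (endp e) = y \<or> snd (endp e) = y \<Longrightarrow> (e \<in> K \<longleftrightarrow> (x1, y) \<in> R)"
proof
  assume y: "y \<notin> W" "e \<in> a" "fst (endp e) = y \<or> snd (endp e) = y"
  show "(x1, y) \<in> R \<Longrightarrow> e \<in> K" using y unfolding K_def by auto
  assume "e \<in> K"
  then consider "fst (endp e) \<notin> W" "(x1, fst (endp e)) \<in> R" | "snd (endp e) \<notin> W" "(x1, snd (endp e)) \<in> R"
    unfolding K_def by blast
  then show "(x1, y) \<in> R"
  proof cases
    case 1
    show ?thesis
    proof (cases "fst (endp e) = y")
      case True then show ?thesis using 1 by simp
    next
      case False
      hence s: "snd (endp e) = y" using y by auto
      hence "e \<in> A0" using y 1 unfolding A0_def by auto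
      hence "(fst (endp e), y) \<in> adj endp A0" using s unfolding adj_def by (auto intro!: bexI[of _ e])
      then show ?thesis using rtrancl_into_rtrancl[OF 1(2)[unfolded R_def]] unfolding R_def by blast
    qed
  next
    case 2
    show ?thesis
    proof (cases "snd (endp e) = y")
      case True then show ?thesis using 2 by simp
    next
      case False
      hence s: "fst (endp e) = y" using y by auto
      hence "e \<in> A0" using y 2 unfolding A0_def by auto
      hence "(snd (endp e), y) \<in> adj endp A0" using s unfolding adj_def by (auto intro!: bexI[of _ e])
      then show ?thesis using rtrancl_into_rtrancl[OF 2(2)[unfolded R_def]] unfolding R_def by blast
    qed
  qed
qed

lemma K_sub: "K \<subseteq> a" unfolding K_def by auto

lemma K2: "y \<notin> W \<Longrightarrow> deg endp K y = (if (x1, y) \<in> R then deg endp a y else 0)"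
proof -
  assume y: "y \<notin> W"
  have "{e\<in>K. fst (endp e) = y} = (if (x1, y) \<in> R then {e\<in>a. fst (endp e) = y} else {})"
    using K1[OF y] K_sub by auto
  moreover have "{e\<in>K. snd (endp e) = y} = (if (x1, y) \<in> R then {e\<in>a. snd (endp e) = y} else {})"
    using K1[OF y] K_sub by auto
  ultimately show ?thesis unfolding deg_def by simp
qed

lemma K3: "support_verts endp K \<inter> support_verts endp (a - K) \<subseteq> W"
proof
  fix y assume h: "y \<in> support_verts endp K \<inter> support_verts endp (a - K)"
  show "y \<in> W"
  proof (rule ccontr)
    assume yW: "y \<notin> W"
    obtain e where e: "e \<in> K" "fst (endp e) = y \<or> snd (endp e) = y" using h unfolding support_verts_def by auto
    obtain f where f: "f \<in> a - K" "fst (endp f) = y \<or> snd (endp f) = y" using h unfolding support_verts_def by auto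
    have "(x1, y) \<in> R" using K1[OF yW _ e(2)] e(1) K_sub by auto
    moreover have "(x1, y) \<notin> R" using K1[OF yW _ f(2)] f(1) by auto
    ultimately show False by simp
  qed
qed

lemma K_ev: "finite a \<Longrightarrow> ev endp a \<Longrightarrow> W \<subseteq> {v} \<Longrightarrow> ev endp K"
proof -
  assume f: "finite a" and ea: "ev endp a" and W: "W \<subseteq> {v}"
  have fK: "finite K" using f K_sub finite_subset by blast
  have ne: "even (deg endp K w)" if "w \<noteq> v" for w
  proof -
    have "w \<notin> W" using W that by auto
    then show ?thesis using K2 ea unfolding ev_def by simp
  qed
  have "even (deg endp K v)" using handshake_parity[OF fK, of v endp] ne by blast
  then show ?thesis using ne unfolding ev_def by (metis)
qed

end




lemma support_Un: "support_verts endp (A \<union> B) = support_verts endp A \<union> support_verts endp B"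
  unfolding support_verts_def by auto

lemma sub_tile: "tilep endp a \<Longrightarrow> K \<subseteq> a \<Longrightarrow> K \<noteq> {} \<Longrightarrow> ev endp K \<Longrightarrow> tilep endp K"
  unfolding tilep_def using finite_subset by blast

lemma combine:
  assumes t: "tilep endp a" and K: "K \<subseteq> a" "K \<noteq> {}" "ev endp K" "a - K \<noteq> {}"
    and sK: "support_verts endp K \<inter> support_verts endp (a - K) \<subseteq> {x}"
    and IH: "\<And>b. card b < card a \<Longrightarrow> tilep endp b \<Longrightarrow> \<exists>n. geo_tile endp (support_verts endp b) b n"
  shows "\<exists>n. geo_tile endp (support_verts endp a) a n"
proof -
  have fa: "finite a" and ea: "ev endp a" using t unfolding tilep_def by auto
  have tK: "tilep endp K" using sub_tile[OF t K(1-3)] .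
  have eL: "ev endp (a - K)" using ev_diff[OF fa K(1) ea K(3)] .
  have tL: "tilep endp (a - K)" using sub_tile[OF t _ K(4) eL] by blast
  have c1: "card K < card a" using K fa by (intro psubset_card_mono) auto
  have c2: "card (a - K) < card a" using K fa by (intro psubset_card_mono) auto
  obtain n1 where g1: "geo_tile endp (support_verts endp K) K n1" using IH[OF c1 tK] by blast
  obtain n2 where g2: "geo_tile endp (support_verts endp (a - K)) (a - K) n2" using IH[OF c2 tL] by blast
  obtain n where "geo_tile endp (support_verts endp K \<union> support_verts endp (a - K)) (K \<union> (a - K)) n"
    using geo_wedge_gen[OF g2 g1 _ sK] by blast
  moreover have "K \<union> (a - K) = a" using K by blast
  ultimately show ?thesis unfolding support_Un[symmetric] by auto
qed

lemma adj_sym: "(adj endp A)\<inverse> = adj endp A"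
  unfolding adj_def by auto

lemma crux:
  assumes fa: "finite a" and ea: "e1 \<in> a" "f \<in> a" "e1 \<noteq> f"
    and e1: "endp e1 = (v, x1) \<or> endp e1 = (x1, v)" "x1 \<noteq> v"
    and f: "endp f = (v, y) \<or> endp f = (y, v)" "y \<noteq> v"
    and A0: "A0 = {e\<in>a. fst (endp e) \<notin> {v} \<and> snd (endp e) \<notin> {v}}"
    and r: "(x1, y) \<in> (adj endp A0)\<^sup>*"
  shows "\<exists>d. atm endp d \<and> d \<subseteq> insert e1 (insert f A0) \<and> e1 \<in> d \<and> f \<in> d"
proof -
  obtain J where J: "finite J" "J \<subseteq> A0" "\<forall>w. odd (deg endp J w) \<longleftrightarrow> ((w = x1) \<noteq> (w = y))"
    using join[OF r] by metis
  have e1A: "e1 \<notin> A0" using e1 A0 by auto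
  have fA: "f \<notin> A0" using f A0 by auto
  define D where "D = insert e1 (insert f J)"
  have fD: "finite D" using J D_def by simp
  have Dsub: "D \<subseteq> insert e1 (insert f A0)" using J D_def by auto
  have Da: "D \<subseteq> a" using Dsub ea A0 by auto
  have dD: "deg endp D w = deg endp J w + ends endp f w + ends endp e1 w" for w
  proof -
    have "f \<notin> J" using fA J by auto
    moreover have "e1 \<notin> insert f J" using e1A J ea by auto
    ultimately show ?thesis unfolding D_def using J(1) by (simp add: deg_insert)
  qed
  have evD: "ev endp D" unfolding ev_def
  proof
    fix w
    have a1: "ends endp e1 w = (if w = v then 1 else 0) + (if w = x1 then 1 else 0)" by (rule ends_edge[of endp e1 v x1, OF e1(1)])
    have a2: "ends endp f w = (if w = v then 1 else 0) + (if w = y then 1 else 0)" by (rule ends_edge[of endp f v y, OF f(1)])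
    have j: "odd (deg endp J w) \<longleftrightarrow> ((w = x1) \<noteq> (w = y))" using J(3) by simp
    show "even (deg endp D w)" unfolding dD a1 a2 using j by (cases "w = v"; cases "w = x1"; cases "w = y") auto
  qed
  have "e1 \<in> D" using D_def by simp
  then obtain d where d: "d \<subseteq> D" "atm endp d" "e1 \<in> d" using atom_dec[OF fD evD] by metis
  have "f \<in> d"
  proof (rule ccontr)
    assume nf: "f \<notin> d"
    have fd: "finite (d - {e1})" using d(1) fD finite_subset by blast
    have sub: "d - {e1} \<subseteq> J" using d(1) nf D_def by auto
    have "deg endp (d - {e1}) v = 0" using sub J(2) A0 by (intro deg_zero) auto
    moreover have "deg endp d v = deg endp (d - {e1}) v + ends endp e1 v"
      using deg_insert[OF fd, of e1 endp v] d(3) by (simp add: insert_absorb)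
    moreover have "ends endp e1 v = 1" using ends_edge[of endp e1 v x1, OF e1(1)] e1(2) by simp
    ultimately have "deg endp d v = 1" by simp
    moreover have "ev endp d" using d(2) unfolding atm_def by simp
    ultimately show False unfolding ev_def by (metis odd_one)
  qed
  then show ?thesis using d Dsub by blast
qed




lemma three_elems: "3 \<le> card S \<Longrightarrow> \<exists>x y z. x \<in> S \<and> y \<in> S \<and> z \<in> S \<and> x \<noteq> y \<and> x \<noteq> z \<and> y \<noteq> z"
proof -
  assume c: "3 \<le> card S"
  hence fS: "finite S" using card.infinite by fastforce
  obtain x where x: "x \<in> S" using c by fastforce
  have "2 \<le> card (S - {x})" using c x fS by simp
  hence "0 < card (S - {x})" by simp
  then obtain y where y: "y \<in> S - {x}" unfolding card_gt_0_iff by blast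
  have "1 \<le> card (S - {x} - {y})" using c x y fS by simp
  hence "0 < card (S - {x} - {y})" by simp
  then obtain z where z: "z \<in> S - {x} - {y}" unfolding card_gt_0_iff by blast
  show ?thesis using x y z by blast
qed

lemma deg_noloop: "(\<forall>e\<in>a. endp e \<noteq> (v, v)) \<Longrightarrow> finite a \<Longrightarrow>
   deg endp a v = card {e\<in>a. fst (endp e) = v \<or> snd (endp e) = v}"
proof -
  assume nl: "\<forall>e\<in>a. endp e \<noteq> (v, v)" and fa: "finite a"
  have "{e\<in>a. fst (endp e) = v \<or> snd (endp e) = v} = {e\<in>a. fst (endp e) = v} \<union> {e\<in>a. snd (endp e) = v}" by auto
  moreover have "{e\<in>a. fst (endp e) = v} \<inter> {e\<in>a. snd (endp e) = v} = {}" using nl by (auto simp: prod_eq_iff)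
  ultimately show ?thesis unfolding deg_def using fa by (simp add: card_Un_disjoint)
qed

lemma main_dir: "tilep endp a \<Longrightarrow> \<exists>n. geo_tile endp (support_verts endp a) a n"
proof (induction "card a" arbitrary: a rule: less_induct)
  case less
  have t: "tilep endp a" by fact
  have IH: "\<And>b. card b < card a \<Longrightarrow> tilep endp b \<Longrightarrow> \<exists>n. geo_tile endp (support_verts endp b) b n"
    using less.hyps by blast
  have fa: "finite a" and ne: "a \<noteq> {}" and ea: "ev endp a"
    and dis: "\<And>c d. atm endp c \<Longrightarrow> atm endp d \<Longrightarrow> c \<subseteq> a \<Longrightarrow> d \<subseteq> a \<Longrightarrow> c \<noteq> d \<Longrightarrow> c \<inter> d = {}"
    using t unfolding tilep_def by auto
  show ?case
  proof (cases "\<exists>v. 3 \<le> deg endp a v")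
    case True
    then obtain v where v: "3 \<le> deg endp a v" by blast
    show ?thesis
    proof (cases "\<exists>l\<in>a. endp l = (v, v)")
      case True
      then obtain l where l: "l \<in> a" "endp l = (v, v)" by blast
      have dl: "deg endp {l} w = (if w = v then 2 else 0)" for w
        using deg_insert[of "{}" l endp w] l(2) by (simp add: ends_def)
      have evl: "ev endp {l}" unfolding ev_def dl by simp
      have "a - {l} \<noteq> {}"
      proof
        assume "a - {l} = {}"
        hence "a = {l}" using l by blast
        thus False using v dl[of v] by simp
      qed
      moreover have "support_verts endp {l} \<inter> support_verts endp (a - {l}) \<subseteq> {v}"
        using l(2) unfolding support_verts_def by auto
      ultimately show ?thesis using combine[OF t _ _ evl _ _ IH] l by blast
    next
      case False
      hence nl: "\<forall>e\<in>a. endp e \<noteq> (v, v)" by blast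
      define Ev where "Ev = {e\<in>a. fst (endp e) = v \<or> snd (endp e) = v}"
      have "3 \<le> card Ev" using v deg_noloop[OF nl fa] Ev_def by simp
      then obtain e1 f g where efg: "e1 \<in> Ev" "f \<in> Ev" "g \<in> Ev" "e1 \<noteq> f" "e1 \<noteq> g" "f \<noteq> g"
        using three_elems by metis
      define oth where "oth e = (if fst (endp e) = v then snd (endp e) else fst (endp e))" for e
      have othp: "endp e = (v, oth e) \<or> endp e = (oth e, v)" "oth e \<noteq> v" if "e \<in> Ev" for e
        using that nl unfolding Ev_def oth_def by (auto simp: prod_eq_iff)
      have inA: "e \<in> a" if "e \<in> Ev" for e using that Ev_def by simp
      define x1 where "x1 = oth e1"
      define A0 where "A0 = splitK.A0 endp a {v}"
      define K where "K = splitK.K endp a {v} x1"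
      have A0d: "A0 = {e\<in>a. fst (endp e) \<notin> {v} \<and> snd (endp e) \<notin> {v}}" unfolding A0_def splitK.A0_def ..
      have Rd: "splitK.R endp a {v} = (adj endp A0)\<^sup>*" unfolding A0_def splitK.R_def ..
      have x1v: "x1 \<notin> {v}" using othp(2)[OF efg(1)] x1_def by simp
      have Ksub: "K \<subseteq> a" unfolding K_def by (rule splitK.K_sub)
      have e1K: "e1 \<in> K"
        unfolding K_def using splitK.K1[OF x1v inA[OF efg(1)], of endp] othp(1)[OF efg(1)] x1_def
        by (auto simp: Rd)
      have evK: "ev endp K" unfolding K_def by (rule splitK.K_ev[OF fa ea], simp)
      have sK: "support_verts endp K \<inter> support_verts endp (a - K) \<subseteq> {v}" unfolding K_def by (rule splitK.K3)
      have "a - K \<noteq> {}"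
      proof
        assume "a - K = {}"
        hence Ka: "K = a" using Ksub by blast
        have conn: "(x1, oth e) \<in> (adj endp A0)\<^sup>*" if "e \<in> Ev" for e
        proof -
          have "oth e \<notin> {v}" using othp(2)[OF that] by simp
          moreover have "fst (endp e) = oth e \<or> snd (endp e) = oth e" using othp(1)[OF that] by auto
          ultimately show ?thesis using splitK.K1[of "oth e" "{v}" e a endp x1] inA[OF that] Ka Rd
            unfolding K_def by auto
        qed
        obtain df where df: "atm endp df" "df \<subseteq> insert e1 (insert f A0)" "e1 \<in> df" "f \<in> df"
          using crux[OF fa inA[OF efg(1)] inA[OF efg(2)] efg(4) othp[OF efg(1)] othp[OF efg(2)] A0d conn[OF efg(2), unfolded x1_def]]
          unfolding x1_def by blast
        obtain dg where dg: "atm endp dg" "dg \<subseteq> insert e1 (insert g A0)" "e1 \<in> dg" "g \<in> dg"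
          using crux[OF fa inA[OF efg(1)] inA[OF efg(3)] efg(5) othp[OF efg(1)] othp[OF efg(3)] A0d conn[OF efg(3), unfolded x1_def]]
          unfolding x1_def by blast
        have "g \<notin> A0" using A0d othp(1)[OF efg(3)] by auto
        hence "g \<notin> df" using df(2) efg by auto
        hence "df \<noteq> dg" using dg(4) by auto
        moreover have "df \<subseteq> a" "dg \<subseteq> a" using df(2) dg(2) A0d inA efg by auto
        ultimately have "df \<inter> dg = {}" using dis df(1) dg(1) by blast
        thus False using df(3) dg(3) by blast
      qed
      moreover have "K \<noteq> {}" using e1K by blast
      ultimately show ?thesis using combine[OF t Ksub _ evK _ sK IH] by blast
    qed
  next
    case False
    hence le2: "deg endp a w \<le> 2" for w using not_le by (metis Suc_le_eq numeral_2_eq_2 numeral_3_eq_3)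
    obtain e0 where e0: "e0 \<in> a" using ne by blast
    define x1 where "x1 = fst (endp e0)"
    define K where "K = splitK.K endp a {} x1"
    have A0d: "splitK.A0 endp a {} = a" unfolding splitK.A0_def by simp
    have Rd: "splitK.R endp a {} = (adj endp a)\<^sup>*" unfolding splitK.R_def A0d ..
    have Ksub: "K \<subseteq> a" unfolding K_def by (rule splitK.K_sub)
    have inK: "e \<in> K \<longleftrightarrow> (x1, y) \<in> (adj endp a)\<^sup>*" if "e \<in> a" "fst (endp e) = y \<or> snd (endp e) = y" for e y
      using splitK.K1[of y "{}" e a endp x1] that unfolding K_def Rd by simp
    have e0K: "e0 \<in> K" using inK[OF e0, of x1] x1_def by simp
    have evK: "ev endp K" unfolding K_def by (rule splitK.K_ev[OF fa ea], simp)
    have sK: "support_verts endp K \<inter> support_verts endp (a - K) \<subseteq> {}" unfolding K_def by (rule splitK.K3)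
    show ?thesis
    proof (cases "K = a")
      case False
      hence "a - K \<noteq> {}" using Ksub by blast
      moreover have "K \<noteq> {}" using e0K by blast
      ultimately show ?thesis using combine[OF t Ksub _ evK _ _ IH, of undefined] sK by blast
    next
      case True
      have reach: "(x1, u) \<in> (adj endp a)\<^sup>*" if hu: "u \<in> support_verts endp a" for u
      proof -
        obtain e where e: "e \<in> a" "fst (endp e) = u \<or> snd (endp e) = u" using hu unfolding support_verts_def by auto
        show ?thesis using inK[OF e] e(1) True by simp
      qed
      have conn: "connected_graph endp (support_verts endp a) a"
        unfolding connected_graph_def
      proof (intro conjI ballI)
        show "support_verts endp a \<noteq> {}" using e0 unfolding support_verts_def by auto
        fix u w assume u: "u \<in> support_verts endp a" and w: "w \<in> support_verts endp a"
        have "(u, x1) \<in> ((adj endp a)\<inverse>)\<^sup>*" using rtrancl_converseI[OF reach[OF u]] .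
        hence "(u, x1) \<in> (adj endp a)\<^sup>*" unfolding adj_sym .
        thus "(u, w) \<in> (adj endp a)\<^sup>*" using reach[OF w] by (rule rtrancl_trans)
      qed
      have d2: "deg endp a w = 2" if hw: "w \<in> support_verts endp a" for w
      proof -
        obtain e where e: "e \<in> a" "fst (endp e) = w \<or> snd (endp e) = w" using hw unfolding support_verts_def by auto
        have "deg endp a w \<noteq> 0" using e fa unfolding deg_def by auto
        moreover have "even (deg endp a w)" using ea unfolding ev_def by simp
        ultimately show ?thesis using le2[of w] even_le2 by blast
      qed
      have "circle_graph endp (support_verts endp a) a"
        unfolding circle_graph_def graph_wf_def
        using conn d2 fa ne finite_support[OF fa] by (auto simp: support_verts_def)
      thus ?thesis using geo_tile.circle by blast
    qed
  qed
qed




lemma atom_iff: "c \<subseteq> E \<Longrightarrow> is_atom endp E c \<longleftrightarrow> atm endp c"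
proof
  assume cE: "c \<subseteq> E"
  {
    assume h: "is_atom endp E c"
    have fc: "finite c" and ec: "ev endp c" and ne: "c \<noteq> {}" using h unfolding is_atom_def H1_def ev_def by auto
    have "T = {} \<or> T = c" if "T \<subseteq> c" "ev endp T" for T
    proof -
      have "T \<in> H1 endp E" using that fc cE finite_subset unfolding H1_def ev_def by auto
      thus ?thesis using h that(1) unfolding is_atom_def by simp
    qed
    thus "atm endp c" unfolding atm_def using fc ec ne by simp
  }
  {
    assume h: "atm endp c"
    have fc: "finite c" and ec: "ev endp c" and ne: "c \<noteq> {}"
      and mn: "\<And>T. T \<subseteq> c \<Longrightarrow> ev endp T \<Longrightarrow> T = {} \<or> T = c" using h unfolding atm_def by auto
    have cH: "c \<in> H1 endp E" using fc ec cE unfolding H1_def ev_def by simp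
    have "y = {} \<or> y = c" if "y \<in> H1 endp E" "y \<subseteq> c" for y
      using mn[OF that(2)] that(1) unfolding H1_def ev_def by simp
    thus "is_atom endp E c" unfolding is_atom_def using cH ne by simp
  }
qed

lemma indep_iff: "independent c d \<longleftrightarrow> c \<inter> d = {}"
  unfolding independent_def hadd_def by blast

theorem theorem12p3:
  fixes endp :: "'e \<Rightarrow> 'v \<times> 'v" and V :: "'v set" and E :: "'e set" and a :: "'e set"
  assumes "graph_wf endp V E"
    and "a \<in> H1 endp E"
  shows "is_tile endp E a \<longleftrightarrow> is_geo_tile endp (support_verts endp a) a"
proof
  have fa: "finite a" and aE: "a \<subseteq> E" and ea: "ev endp a" using assms(2) unfolding H1_def ev_def by auto
  {
    assume it: "is_tile endp E a"
    have "tilep endp a" unfolding tilep_def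
    proof (intro conjI allI impI)
      show "finite a" "ev endp a" by fact+
      show "a \<noteq> {}" using it unfolding is_tile_def by simp
      fix c d assume h: "atm endp c" "atm endp d" "c \<subseteq> a" "d \<subseteq> a" "c \<noteq> d"
      have "is_atom endp E c" using atom_iff[of c E endp] h aE by blast
      moreover have "is_atom endp E d" using atom_iff[of d E endp] h aE by blast
      ultimately have "independent c d" using it h(3-5) unfolding is_tile_def by simp
      thus "c \<inter> d = {}" unfolding indep_iff .
    qed
    thus "is_geo_tile endp (support_verts endp a) a" unfolding is_geo_tile_def by (rule main_dir)
  }
  {
    assume "is_geo_tile endp (support_verts endp a) a"
    then obtain n where g: "geo_tile endp (support_verts endp a) a n" unfolding is_geo_tile_def by blast
    have Q: "QQ endp a" using geo_QQ[OF g] .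
    have ne: "a \<noteq> {}" using geo_basic[OF g] by simp
    show "is_tile endp E a" unfolding is_tile_def
    proof (intro conjI allI impI)
      show "a \<in> H1 endp E" by fact
      show "a \<noteq> {}" by fact
      fix c d assume h: "is_atom endp E c" "is_atom endp E d" "c \<subseteq> a" "d \<subseteq> a" "c \<noteq> d"
      have "atm endp c" using atom_iff[of c E endp] h aE by blast
      moreover have "atm endp d" using atom_iff[of d E endp] h aE by blast
      ultimately have "c \<inter> d = {}" using Q h(3-5) unfolding QQ_def by simp
      thus "independent c d" unfolding indep_iff .
    qed
  }
qed


end
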